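(* Let $n,m\ge 1$, let $A=(a_1,\ldots,a_m)$ be a real $n\times m$ matrix with $a_i\neq 0$ for all $i$, and let $b=(b_1,\ldots,b_m)^\top\in\mathbb{R}^m$ be such that $K=\{x\in\mathbb{R}^n \mid A^\top x\le b\}$ is nonempty. For $\varepsilon>0$ put $b_i(\varepsilon)=b_i+\varepsilon^i$ ($\varepsilon$ to the power $i$), $H_i(\varepsilon)=\{x\in\mathbb{R}^n\mid a_i^\top x\le b_i(\varepsilon)\}$, $\partial H_i(\varepsilon)=\{x\in\mathbb{R}^n\mid a_i^\top x= b_i(\varepsilon)\}$, $K(\varepsilon)=\bigcap_{i=1}^m H_i(\varepsilon)$, $F_i(\varepsilon)=\partial H_i(\varepsilon)\cap K(\varepsilon)$, and $\mathcal{F}(\varepsilon)=\{J\subseteq\{1,\ldots,m\}\mid J\neq\emptyset,\ \bigcap_{i\in J}F_i(\varepsilon)\neq\emptyset\}$. Then there exists $\delta>0$ such that for all $\varepsilon\in(0,\delta)$: (i) the family of hyperplanes $\{\partial H_i(\varepsilon)\mid i=1,\ldots,m\}$ is in general position; and (ii) $\mathcal{F}(\varepsilon)$ does not depend on $\varepsilon$; writing $\mathcal{F}(0+)$ for this common value, $\mathcal{F}(0+)$ is a simplicial complex.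
   Context: A finite set of $m$ hyperplanes $\{P_i\subset\mathbb{R}^n\mid i=1,\ldots,m\}$ is said to be in general position if there is no $J\subseteq\{1,\ldots,m\}$ such that $\bigcap_{i\in J}P_i$ contains an affine subspace of dimension $\max\{n+1-|J|,0\}$. A simplicial complex here means an abstract simplicial complex on the vertex set $\{1,\ldots,m\}$: a family of nonempty subsets closed under taking nonempty subsets. *)

theory Defs
  imports "HOL-Analysis.Analysis"
begin

definition general_position :: "nat \<Rightarrow> (nat \<Rightarrow> ('a::euclidean_space) set) \<Rightarrow> bool" where
  "general_position m P \<longleftrightarrow>
     \<not> (\<exists>J S. J \<subseteq> {1..m} \<and> affine S \<and> S \<noteq> {} \<and>
            aff_dim S = max (int DIM('a) + 1 - int (card J)) 0 \<and>
            S \<subseteq> (\<Inter>i\<in>J. P i))"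

definition simplicial_complex :: "nat \<Rightarrow> nat set set \<Rightarrow> bool" where
  "simplicial_complex m \<F> \<longleftrightarrow>
     (\<forall>J\<in>\<F>. J \<noteq> {} \<and> J \<subseteq> {1..m}) \<and>
     (\<forall>J\<in>\<F>. \<forall>I. I \<noteq> {} \<and> I \<subseteq> J \<longrightarrow> I \<in> \<F>)"

definition bpert :: "(nat \<Rightarrow> real) \<Rightarrow> real \<Rightarrow> nat \<Rightarrow> real" where
  "bpert b \<epsilon> i = b i + \<epsilon> ^ i"

definition halfspace_eps :: "(nat \<Rightarrow> 'a::euclidean_space) \<Rightarrow> (nat \<Rightarrow> real) \<Rightarrow> real \<Rightarrow> nat \<Rightarrow> 'a set" where
  "halfspace_eps a b \<epsilon> i = {x. a i \<bullet> x \<le> bpert b \<epsilon> i}"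

definition hyperplane_eps :: "(nat \<Rightarrow> 'a::euclidean_space) \<Rightarrow> (nat \<Rightarrow> real) \<Rightarrow> real \<Rightarrow> nat \<Rightarrow> 'a set" where
  "hyperplane_eps a b \<epsilon> i = {x. a i \<bullet> x = bpert b \<epsilon> i}"

definition K_eps :: "nat \<Rightarrow> (nat \<Rightarrow> 'a::euclidean_space) \<Rightarrow> (nat \<Rightarrow> real) \<Rightarrow> real \<Rightarrow> 'a set" where
  "K_eps m a b \<epsilon> = (\<Inter>i\<in>{1..m}. halfspace_eps a b \<epsilon> i)"

definition F_eps :: "nat \<Rightarrow> (nat \<Rightarrow> 'a::euclidean_space) \<Rightarrow> (nat \<Rightarrow> real) \<Rightarrow> real \<Rightarrow> nat \<Rightarrow> 'a set" where
  "F_eps m a b \<epsilon> i = hyperplane_eps a b \<epsilon> i \<inter> K_eps m a b \<epsilon>"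

definition face_family :: "nat \<Rightarrow> (nat \<Rightarrow> 'a::euclidean_space) \<Rightarrow> (nat \<Rightarrow> real) \<Rightarrow> real \<Rightarrow> nat set set" where
  "face_family m a b \<epsilon> = {J. J \<subseteq> {1..m} \<and> J \<noteq> {} \<and> (\<Inter>i\<in>J. F_eps m a b \<epsilon> i) \<noteq> {}}"

end

theory Submission
  imports Defs "HOL-Computational_Algebra.Polynomial"
begin


lemma poly_ev_nz:
  fixes p :: "real poly"
  assumes "p \<noteq> 0"
  shows "(\<forall>\<^sub>F e in at_right 0. poly p e > 0) \<or> (\<forall>\<^sub>F e in at_right 0. poly p e < 0)"
proof -
  obtain q where q: "p = [:- 0, 1:] ^ order 0 p * q" "\<not> [:- 0, 1:] dvd q"
    using order_decomp[OF assms] by blast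
  have q0: "poly q 0 \<noteq> 0" using q(2) poly_eq_0_iff_dvd by blast
  have lim: "(poly q \<longlongrightarrow> poly q 0) (at_right 0)"
    using poly_isCont[where p=q and x=0] by (simp add: isCont_def filterlim_at_split)
  have pe: "poly p e = e ^ order 0 p * poly q e" for e
    by (subst q(1)) (simp add: poly_monom)
  show ?thesis
  proof (cases "poly q 0 > 0")
    case True
    have "\<forall>\<^sub>F e in at_right 0. poly q e > 0" using order_tendstoD(1)[OF lim True] .
    then have "\<forall>\<^sub>F e in at_right 0. poly p e > 0"
      using eventually_at_right_less[of "0::real"]
      by eventually_elim (simp add: pe)
    then show ?thesis by blast
  next
    case False
    then have neg: "poly q 0 < 0" using q0 by linarith
    have "\<forall>\<^sub>F e in at_right 0. poly q e < 0" using order_tendstoD(2)[OF lim neg] .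
    then have "\<forall>\<^sub>F e in at_right 0. poly p e < 0"
      using eventually_at_right_less[of "0::real"]
      by eventually_elim (simp add: pe mult_pos_neg)
    then show ?thesis by blast
  qed
qed

definition evc :: "(real \<Rightarrow> bool) \<Rightarrow> bool" where
  "evc P \<longleftrightarrow> (\<forall>\<^sub>F e in at_right 0. P e) \<or> (\<forall>\<^sub>F e in at_right 0. \<not> P e)"

lemma evc_poly: "evc (\<lambda>e. 0 \<le> poly p e)"
proof (cases "p = 0")
  case True then show ?thesis by (simp add: evc_def)
next
  case False
  from poly_ev_nz[OF this] show ?thesis unfolding evc_def
  proof
    assume "\<forall>\<^sub>F e in at_right 0. poly p e > 0"
    then show "(\<forall>\<^sub>F e in at_right 0. 0 \<le> poly p e) \<or> (\<forall>\<^sub>F e in at_right 0. \<not> 0 \<le> poly p e)"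
      by (auto elim: eventually_mono)
  next
    assume "\<forall>\<^sub>F e in at_right 0. poly p e < 0"
    then have "\<forall>\<^sub>F e in at_right 0. \<not> 0 \<le> poly p e" by (rule eventually_mono) auto
    then show "(\<forall>\<^sub>F e in at_right 0. 0 \<le> poly p e) \<or> (\<forall>\<^sub>F e in at_right 0. \<not> 0 \<le> poly p e)"
      by blast
  qed
qed

lemma evc_conj: "evc P \<Longrightarrow> evc Q \<Longrightarrow> evc (\<lambda>e. P e \<and> Q e)"
  unfolding evc_def
proof (elim disjE)
  assume "\<forall>\<^sub>F e in at_right 0. P e" "\<forall>\<^sub>F e in at_right 0. Q e"
  then show "(\<forall>\<^sub>F e in at_right 0. P e \<and> Q e) \<or> (\<forall>\<^sub>F e in at_right 0. \<not> (P e \<and> Q e))"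
    using eventually_conj by blast
next
  assume "\<forall>\<^sub>F e in at_right 0. \<not> Q e"
  then have "\<forall>\<^sub>F e in at_right 0. \<not> (P e \<and> Q e)" by (rule eventually_mono) auto
  then show "(\<forall>\<^sub>F e in at_right 0. P e \<and> Q e) \<or> (\<forall>\<^sub>F e in at_right 0. \<not> (P e \<and> Q e))" by blast
next
  assume "\<forall>\<^sub>F e in at_right 0. \<not> P e"
  then have "\<forall>\<^sub>F e in at_right 0. \<not> (P e \<and> Q e)" by (rule eventually_mono) auto
  then show "(\<forall>\<^sub>F e in at_right 0. P e \<and> Q e) \<or> (\<forall>\<^sub>F e in at_right 0. \<not> (P e \<and> Q e))" by blast
next
  assume "\<forall>\<^sub>F e in at_right 0. \<not> P e"
  then have "\<forall>\<^sub>F e in at_right 0. \<not> (P e \<and> Q e)" by (rule eventually_mono) auto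
  then show "(\<forall>\<^sub>F e in at_right 0. P e \<and> Q e) \<or> (\<forall>\<^sub>F e in at_right 0. \<not> (P e \<and> Q e))" by blast
qed

lemma evc_list: "evc (\<lambda>e. \<forall>(v,p)\<in>set cs. 0 \<le> poly p e)"
proof (induction cs)
  case Nil then show ?case by (simp add: evc_def)
next
  case (Cons c cs)
  obtain v p where c: "c = (v,p)" by fastforce
  have "evc (\<lambda>e. 0 \<le> poly p e \<and> (\<forall>(v,p)\<in>set cs. 0 \<le> poly p e))"
    by (rule evc_conj[OF evc_poly Cons.IH])
  then show ?case by (simp add: c)
qed

lemma evc_cong: "(\<And>e. P e = Q e) \<Longrightarrow> evc P \<Longrightarrow> evc Q"
proof -
  assume "\<And>e. P e = Q e" "evc P"
  moreover have "P = Q" using calculation(1) by blast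
  ultimately show "evc Q" by simp
qed



definition feas :: "((real^'n) \<times> real poly) list \<Rightarrow> real \<Rightarrow> bool" where
  "feas cs e \<longleftrightarrow> (\<exists>x. \<forall>(v,p)\<in>set cs. v \<bullet> x \<le> poly p e)"

definition comb :: "'n \<Rightarrow> ((real^'n) \<times> real poly) \<Rightarrow> ((real^'n) \<times> real poly) \<Rightarrow> ((real^'n) \<times> real poly)" where
  "comb k c d = ((-(fst d$k)) *\<^sub>R fst c + (fst c$k) *\<^sub>R fst d, smult (-(fst d$k)) (snd c) + smult (fst c$k) (snd d))"

definition fm :: "'n \<Rightarrow> ((real^'n) \<times> real poly) list \<Rightarrow> ((real^'n) \<times> real poly) list" where
  "fm k cs = filter (\<lambda>c. fst c$k = 0) cs @
     [comb k c d. c \<leftarrow> filter (\<lambda>c. fst c$k > 0) cs, d \<leftarrow> filter (\<lambda>d. fst d$k < 0) cs]"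

lemma set_fm: "set (fm k cs) = {c\<in>set cs. fst c$k = 0} \<union>
   {comb k c d | c d. c \<in> set cs \<and> fst c$k > 0 \<and> d \<in> set cs \<and> fst d$k < 0}"
  unfolding fm_def by auto

lemma sep_bound:
  fixes L U :: "real set"
  assumes "finite L" "finite U" "\<forall>l\<in>L. \<forall>u\<in>U. l \<le> u"
  shows "\<exists>t. (\<forall>l\<in>L. l \<le> t) \<and> (\<forall>u\<in>U. t \<le> u)"
proof (cases "L = {}")
  case True
  show ?thesis
  proof (cases "U = {}")
    case True with \<open>L = {}\<close> show ?thesis by auto
  next
    case False
    then show ?thesis using True assms by (intro exI[of _ "Min U"]) auto
  qed
next
  case False
  then show ?thesis using assms by (intro exI[of _ "Max L"]) auto
qed

lemma key_ineq:
  fixes A B al be :: real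
  assumes "al > 0" "be < 0" "(-be) * A + al * B \<ge> 0"
  shows "B / be \<le> A / al"
proof -
  have "B / be = (-B) / (-be)" by simp
  also have "\<dots> \<le> A / al"
    using assms by (simp add: divide_le_eq le_divide_eq field_simps)
  finally show ?thesis .
qed

lemma fm_mem:
  assumes "(v,p) \<in> set (fm k cs)"
  shows "((v,p) \<in> set cs \<and> v$k = 0) \<or> (\<exists>v' p' w q. (v',p') \<in> set cs \<and> 0 < v'$k \<and> (w,q) \<in> set cs \<and> w$k < 0 \<and>
      v = (-(w$k)) *\<^sub>R v' + (v'$k) *\<^sub>R w \<and> p = smult (-(w$k)) p' + smult (v'$k) q)"
  using assms unfolding set_fm by (auto simp: comb_def)

lemma fm_mem_intro:
  assumes "(v,p) \<in> set cs" "0 < v$k" "(w,q) \<in> set cs" "w$k < 0"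
  shows "((-(w$k)) *\<^sub>R v + (v$k) *\<^sub>R w, smult (-(w$k)) p + smult (v$k) q) \<in> set (fm k cs)"
proof -
  have "comb k (v,p) (w,q) \<in> set (fm k cs)" unfolding set_fm using assms by force
  then show ?thesis by (simp add: comb_def)
qed

lemma fm_equiv: "feas (fm k cs) e = feas cs e"
proof
  assume "feas cs e"
  then obtain x where x: "\<forall>(v,p)\<in>set cs. v \<bullet> x \<le> poly p e" unfolding feas_def by blast
  have "\<forall>(v,p)\<in>set (fm k cs). v \<bullet> x \<le> poly p e"
  proof (clarify)
    fix v p assume "(v,p) \<in> set (fm k cs)"
    then consider "(v,p) \<in> set cs" "v$k = 0"
      | v' p' w q where "(v',p') \<in> set cs" "0 < v'$k" "(w,q) \<in> set cs" "w$k < 0"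
      "v = (-(w$k)) *\<^sub>R v' + (v'$k) *\<^sub>R w" "p = smult (-(w$k)) p' + smult (v'$k) q"
      using fm_mem by blast
    then show "v \<bullet> x \<le> poly p e"
    proof cases
      case 1 then show ?thesis using x by auto
    next
      case h: 2
      have 1: "v' \<bullet> x \<le> poly p' e" "w \<bullet> x \<le> poly q e" using x h by auto
      have "v \<bullet> x = v'$k * (w \<bullet> x) + (- w$k) * (v' \<bullet> x)" using h by (simp add: inner_diff_left inner_add_left)
      also have "\<dots> \<le> v'$k * poly q e + (-w$k) * poly p' e"
        using 1 h by (intro add_mono mult_left_mono) auto
      also have "\<dots> = poly p e" using h by simp
      finally show ?thesis .
    qed
  qed
  then show "feas (fm k cs) e" unfolding feas_def by blast
next
  assume "feas (fm k cs) e"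
  then obtain y where y: "\<forall>(v,p)\<in>set (fm k cs). v \<bullet> y \<le> poly p e" unfolding feas_def by blast
  define L where "L = (\<lambda>(w,q). (poly q e - w \<bullet> y) / w$k) ` {(w,q). (w,q) \<in> set cs \<and> w$k < 0}"
  define U where "U = (\<lambda>(v,p). (poly p e - v \<bullet> y) / v$k) ` {(v,p). (v,p) \<in> set cs \<and> v$k > 0}"
  have fL: "finite L" unfolding L_def
    by (rule finite_imageI, rule finite_subset[of _ "set cs"]) auto
  have fU: "finite U" unfolding U_def
    by (rule finite_imageI, rule finite_subset[of _ "set cs"]) auto
  have LU: "\<forall>l\<in>L. \<forall>u\<in>U. l \<le> u"
  proof (clarsimp simp: L_def U_def)
    fix w q v p assume h: "(w,q) \<in> set cs" "w$k < 0" "(v,p) \<in> set cs" "0 < v$k"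
    then have "((-(w$k)) *\<^sub>R v + (v$k) *\<^sub>R w, smult (-(w$k)) p + smult (v$k) q) \<in> set (fm k cs)"
      using fm_mem_intro[of v p cs k w q] h by blast
    then have "((-(w$k)) *\<^sub>R v + (v$k) *\<^sub>R w) \<bullet> y \<le> poly (smult (-(w$k)) p + smult (v$k) q) e"
      using y by fastforce
    then have "(-(w$k)) * (poly p e - v \<bullet> y) + v$k * (poly q e - w \<bullet> y) \<ge> 0"
      by (simp add: inner_add_left algebra_simps)
    then show "(poly q e - w \<bullet> y) / w $ k \<le> (poly p e - v \<bullet> y) / v $ k"
      using key_ineq h by blast
  qed
  obtain s where s: "\<forall>l\<in>L. l \<le> s" "\<forall>u\<in>U. s \<le> u" using sep_bound[OF fL fU LU] by blast
  define x where "x = y + s *\<^sub>R axis k 1"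
  have "\<forall>(v,p)\<in>set cs. v \<bullet> x \<le> poly p e"
  proof (clarify)
    fix v p assume vp: "(v,p) \<in> set cs"
    have vx: "v \<bullet> x = v \<bullet> y + s * v$k" unfolding x_def by (simp add: inner_add_right inner_axis)
    consider "v$k = 0" | "v$k > 0" | "v$k < 0" by linarith
    then show "v \<bullet> x \<le> poly p e"
    proof cases
      case 1
      then have "(v,p) \<in> set (fm k cs)" using vp unfolding set_fm by auto
      then show ?thesis using y vx 1 by auto
    next
      case 2
      then have "s \<le> (poly p e - v \<bullet> y) / v$k" using s(2) vp unfolding U_def by auto
      then have "s * v$k \<le> poly p e - v \<bullet> y" using 2 by (simp add: le_divide_eq)
      then show ?thesis using vx by linarith
    next
      case 3
      then have "(poly p e - v \<bullet> y) / v$k \<le> s" using s(1) vp unfolding L_def by auto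
      then have "s * v$k \<le> poly p e - v \<bullet> y" using 3 by (simp add: divide_le_eq mult.commute)
      then show ?thesis using vx by linarith
    qed
  qed
  then show "feas cs e" unfolding feas_def by blast
qed

lemma fm_support:
  assumes "\<forall>(v,p)\<in>set cs. \<forall>j. j \<notin> insert k I \<longrightarrow> v$j = 0"
  shows "\<forall>(v,p)\<in>set (fm k cs). \<forall>j. j \<notin> I \<longrightarrow> v$j = 0"
proof (clarify)
  fix v p j assume vp: "(v,p) \<in> set (fm k cs)" and j: "j \<notin> I"
  show "v$j = 0"
  proof (cases "j = k")
    case True
    then show ?thesis using fm_mem[OF vp] by auto
  next
    case False
    with j have "j \<notin> insert k I" by auto
    from fm_mem[OF vp] show ?thesis
    proof (elim disjE exE conjE)
      assume "(v,p) \<in> set cs" then show ?thesis using assms \<open>j \<notin> insert k I\<close> by fastforce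
    next
      fix v' p' w q assume h: "(v',p') \<in> set cs" "(w,q) \<in> set cs" "v = (-(w$k)) *\<^sub>R v' + (v'$k) *\<^sub>R w"
      have "v'$j = 0" "w$j = 0" using h(1,2) assms \<open>j \<notin> insert k I\<close> by fastforce+
      then show ?thesis using h(3) by simp
    qed
  qed
qed

lemma fm_evc:
  assumes "finite I"
  shows "\<forall>cs. (\<forall>(v,p)\<in>set cs. \<forall>j. j \<notin> I \<longrightarrow> v$j = 0) \<longrightarrow> evc (feas (cs :: ((real^'n) \<times> real poly) list))"
  using assms
proof (induction I rule: finite_induct)
  case empty
  show ?case
  proof (intro allI impI)
    fix cs :: "((real^'n) \<times> real poly) list"
    assume h: "\<forall>(v,p)\<in>set cs. \<forall>j. j \<notin> {} \<longrightarrow> v$j = 0"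
    have "feas cs e = (\<forall>(v,p)\<in>set cs. 0 \<le> poly p e)" for e
    proof -
      have "\<forall>(v,p)\<in>set cs. v = 0" using h by (auto simp: vec_eq_iff)
      then show ?thesis unfolding feas_def by fastforce
    qed
    then show "evc (feas cs)" using evc_cong[OF _ evc_list[of cs]] by metis
  qed
next
  case (insert k I)
  show ?case
  proof (intro allI impI)
    fix cs :: "((real^'n) \<times> real poly) list"
    assume h: "\<forall>(v,p)\<in>set cs. \<forall>j. j \<notin> insert k I \<longrightarrow> v$j = 0"
    have "evc (feas (fm k cs))" using insert.IH fm_support[OF h] by blast
    moreover have "feas (fm k cs) = feas cs" using fm_equiv[of k cs] by (rule ext)
    ultimately show "evc (feas cs)" by simp
  qed
qed

lemma feas_evc: "evc (feas (cs :: ((real^'n::finite) \<times> real poly) list))"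
  using fm_evc[of "UNIV :: 'n set"] by auto



lemma dep_family:
  fixes a :: "nat \<Rightarrow> 'a::euclidean_space"
  assumes "finite J" "dim (a ` J) < card J"
  shows "\<exists>l. (\<exists>i\<in>J. l i \<noteq> 0) \<and> (\<Sum>i\<in>J. l i *\<^sub>R a i) = 0"
proof (cases "inj_on a J")
  case True
  from True have "card (a ` J) = card J" by (rule card_image)
  have "dependent (a ` J)"
  proof (rule ccontr)
    assume "\<not> dependent (a ` J)"
    then have "dim (a ` J) = card (a ` J)" by (rule dim_eq_card_independent)
    with \<open>card (a ` J) = card J\<close> assms(2) show False by linarith
  qed
  then obtain u where u: "\<exists>v\<in>a ` J. u v \<noteq> 0" "(\<Sum>v\<in>a ` J. u v *\<^sub>R v) = 0"
    using iffD1[OF dependent_finite[OF finite_imageI[OF assms(1)]]] by blast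
  have "(\<Sum>v\<in>a ` J. u v *\<^sub>R v) = (\<Sum>i\<in>J. u (a i) *\<^sub>R a i)"
    using sum.reindex[OF True, of "\<lambda>v. u v *\<^sub>R v"] by (simp add: o_def)
  then have "(\<Sum>i\<in>J. u (a i) *\<^sub>R a i) = 0" using u(2) by simp
  moreover have "\<exists>i\<in>J. u (a i) \<noteq> 0" using u(1) by blast
  ultimately show ?thesis by (intro exI[of _ "\<lambda>i. u (a i)"] conjI)
next
  case False
  then obtain i j where ij: "i \<in> J" "j \<in> J" "i \<noteq> j" "a i = a j" unfolding inj_on_def by blast
  define l where "l t = (if t = i then 1 else if t = j then -1 else (0::real))" for t
  have "(\<Sum>t\<in>J. l t *\<^sub>R a t) = (\<Sum>t\<in>J. (if t = i then a i else 0) + (if t = j then - a j else 0))"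
    using ij(3) by (intro sum.cong) (auto simp: l_def)
  also have "\<dots> = a i - a j" using ij(1,2) assms(1) by (simp add: sum.distrib)
  also have "\<dots> = 0" using ij(4) by simp
  finally have "(\<Sum>t\<in>J. l t *\<^sub>R a t) = 0" .
  moreover have "l i \<noteq> 0" by (simp add: l_def)
  ultimately show ?thesis using ij(1) by (intro exI[of _ l] conjI bexI[of _ i])
qed

lemma dep_of_S:
  fixes a :: "nat \<Rightarrow> 'a::euclidean_space"
  assumes "finite J" "affine S" "S \<noteq> {}"
    and "aff_dim S = max (int DIM('a) + 1 - int (card J)) 0"
    and "S \<subseteq> (\<Inter>i\<in>J. {x. a i \<bullet> x = c i})"
  shows "\<exists>l. (\<exists>i\<in>J. l i \<noteq> 0) \<and> (\<Sum>i\<in>J. l i *\<^sub>R a i) = 0"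
proof -
  obtain x0 where x0: "x0 \<in> S" using assms(3) by blast
  define V where "V = (\<lambda>x. (-x0) + x) ` S"
  have sV: "subspace V" unfolding V_def by (rule affine_diffs_subspace[OF assms(2) x0])
  have adV: "aff_dim S = int (dim V)" unfolding V_def
    by (rule aff_dim_eq_dim) (simp add: hull_inc x0)
  define W where "W = {y. \<forall>x\<in>V. orthogonal x y}"
  have "dim {y \<in> UNIV. \<forall>x\<in>V. orthogonal x y} + dim V = dim (UNIV :: 'a set)"
    by (rule dim_subspace_orthogonal_to_vectors) (use sV in auto)
  then have dWV: "dim W + dim V = DIM('a)" unfolding W_def by (simp add: dim_UNIV)
  have "a ` J \<subseteq> W"
  proof (clarsimp simp: W_def V_def orthogonal_def)
    fix i x assume i: "i \<in> J" and x: "x \<in> S"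
    have "a i \<bullet> x = c i" "a i \<bullet> x0 = c i" using assms(5) i x x0 by auto
    moreover have "(x - x0) \<bullet> a i = x \<bullet> a i - x0 \<bullet> a i" by (rule inner_diff_left)
    moreover have "x \<bullet> a i = a i \<bullet> x" "x0 \<bullet> a i = a i \<bullet> x0" by (rule inner_commute)+
    ultimately show "(x - x0) \<bullet> a i = 0" by linarith
  qed
  then have "dim (a ` J) \<le> dim W" by (rule dim_subset)
  moreover have "dim W + dim V = DIM('a)" by (rule dWV)
  moreover have "int (dim V) = max (int DIM('a) + 1 - int (card J)) 0" using adV assms(4) by simp
  ultimately have "dim (a ` J) < card J" by linarith
  then show ?thesis using dep_family[OF assms(1)] by blast
qed



definition pb :: "(nat \<Rightarrow> real) \<Rightarrow> nat \<Rightarrow> real poly" where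
  "pb b i = [:b i:] + monom 1 i"

lemma poly_pb: "poly (pb b i) e = bpert b e i"
  by (simp add: pb_def bpert_def poly_monom)

definition csJ :: "nat \<Rightarrow> (nat \<Rightarrow> real^'n) \<Rightarrow> (nat \<Rightarrow> real) \<Rightarrow> nat set \<Rightarrow> ((real^'n) \<times> real poly) list" where
  "csJ m a b J = map (\<lambda>i. (a i, pb b i)) [1..<Suc m] @ map (\<lambda>i. (-a i, -pb b i)) (sorted_list_of_set J)"

lemma Inter_F:
  assumes "J \<noteq> {}"
  shows "(\<Inter>i\<in>J. F_eps m a b e i) = {x. (\<forall>i\<in>J. a i \<bullet> x = bpert b e i) \<and> (\<forall>i\<in>{1..m}. a i \<bullet> x \<le> bpert b e i)}"
  using assms unfolding F_eps_def hyperplane_eps_def K_eps_def halfspace_eps_def by auto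

lemma ff_feas:
  fixes a :: "nat \<Rightarrow> real^'n"
  assumes "J \<subseteq> {1..m}" "J \<noteq> {}"
  shows "(J \<in> face_family m a b e) = feas (csJ m a b J) e"
proof -
  have fJ: "finite J" using assms(1) finite_subset by blast
  have "(J \<in> face_family m a b e) = (\<exists>x. (\<forall>i\<in>J. a i \<bullet> x = bpert b e i) \<and> (\<forall>i\<in>{1..m}. a i \<bullet> x \<le> bpert b e i))"
    unfolding face_family_def using assms Inter_F[OF assms(2), of m a b e] by auto
  also have "\<dots> = feas (csJ m a b J) e"
  proof -
    have eq: "(\<forall>(v,p)\<in>set (csJ m a b J). v \<bullet> x \<le> poly p e) \<longleftrightarrow>
       ((\<forall>i\<in>{1..m}. a i \<bullet> x \<le> bpert b e i) \<and> (\<forall>i\<in>J. a i \<bullet> x \<ge> bpert b e i))" for x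
    proof -
      have st: "set (csJ m a b J) = (\<lambda>i. (a i, pb b i)) ` {1..m} \<union> (\<lambda>i. (-a i, -pb b i)) ` J"
        unfolding csJ_def set_append set_map set_upt set_sorted_list_of_set[OF fJ] atLeastLessThanSuc_atLeastAtMost
        by (rule refl)
      show ?thesis
      proof
        assume h: "\<forall>(v,p)\<in>set (csJ m a b J). v \<bullet> x \<le> poly p e"
        have 1: "a i \<bullet> x \<le> bpert b e i" if "i \<in> {1..m}" for i
        proof -
          have "(a i, pb b i) \<in> set (csJ m a b J)" using that st by blast
          then show ?thesis using h by (auto simp: poly_pb)
        qed
        have 2: "a i \<bullet> x \<ge> bpert b e i" if "i \<in> J" for i
        proof -
          have "(-a i, -pb b i) \<in> set (csJ m a b J)" using that st by blast
          then have "-a i \<bullet> x \<le> poly (-pb b i) e" using h by fastforce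
          then show ?thesis by (simp add: poly_pb)
        qed
        show "(\<forall>i\<in>{1..m}. a i \<bullet> x \<le> bpert b e i) \<and> (\<forall>i\<in>J. a i \<bullet> x \<ge> bpert b e i)"
          using 1 2 by blast
      next
        assume h: "(\<forall>i\<in>{1..m}. a i \<bullet> x \<le> bpert b e i) \<and> (\<forall>i\<in>J. a i \<bullet> x \<ge> bpert b e i)"
        show "\<forall>(v,p)\<in>set (csJ m a b J). v \<bullet> x \<le> poly p e"
          unfolding st using h by (auto simp: poly_pb)
      qed
    qed
    have eq2: "((\<forall>i\<in>J. a i \<bullet> x = bpert b e i) \<and> (\<forall>i\<in>{1..m}. a i \<bullet> x \<le> bpert b e i)) \<longleftrightarrow>
       ((\<forall>i\<in>{1..m}. a i \<bullet> x \<le> bpert b e i) \<and> (\<forall>i\<in>J. a i \<bullet> x \<ge> bpert b e i))" for x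
      using assms(1) by (auto intro: antisym)
    show ?thesis unfolding feas_def eq eq2 by (rule refl)
  qed
  finally show ?thesis .
qed

lemma ff_evc:
  fixes a :: "nat \<Rightarrow> real^'n"
  shows "evc (\<lambda>e. J \<in> face_family m a b e)"
proof (cases "J \<subseteq> {1..m} \<and> J \<noteq> {}")
  case True
  then have *: "\<And>e. feas (csJ m a b J) e = (J \<in> face_family m a b e)" using ff_feas by metis
  show ?thesis by (rule evc_cong[OF * feas_evc])
next
  case False
  then have "\<And>e. J \<notin> face_family m a b e" unfolding face_family_def by auto
  then show ?thesis unfolding evc_def by simp
qed

lemma ff_mono:
  assumes "J \<in> face_family m a b e" "I \<subseteq> J" "I \<noteq> {}"
  shows "I \<in> face_family m a b e"
  using assms unfolding face_family_def by blast



definition depJ :: "(nat \<Rightarrow> 'a::real_vector) \<Rightarrow> nat set \<Rightarrow> bool" where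
  "depJ a J \<longleftrightarrow> (\<exists>l. (\<exists>i\<in>J. l i \<noteq> 0) \<and> (\<Sum>i\<in>J. l i *\<^sub>R a i) = 0)"

definition lam :: "(nat \<Rightarrow> 'a::real_vector) \<Rightarrow> nat set \<Rightarrow> nat \<Rightarrow> real" where
  "lam a J = (SOME l. (\<exists>i\<in>J. l i \<noteq> 0) \<and> (\<Sum>i\<in>J. l i *\<^sub>R a i) = 0)"

lemma lam_prop:
  assumes "depJ a J"
  shows "(\<exists>i\<in>J. lam a J i \<noteq> 0) \<and> (\<Sum>i\<in>J. lam a J i *\<^sub>R a i) = 0"
  using assms unfolding depJ_def lam_def by (rule someI_ex)

definition pJ :: "(nat \<Rightarrow> 'a::real_vector) \<Rightarrow> (nat \<Rightarrow> real) \<Rightarrow> nat set \<Rightarrow> real poly" where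
  "pJ a b J = (\<Sum>i\<in>J. smult (lam a J i) (pb b i))"

lemma coeff_pb: "i0 \<ge> 1 \<Longrightarrow> coeff (pb b i) i0 = (if i = i0 then 1 else 0)"
  by (cases i0) (auto simp: pb_def coeff_monom)

lemma pJ_nz:
  assumes "depJ a J" "J \<subseteq> {1..m}"
  shows "pJ a b J \<noteq> 0"
proof -
  obtain i0 where i0: "i0 \<in> J" "lam a J i0 \<noteq> 0" using lam_prop[OF assms(1)] by blast
  have fJ: "finite J" using assms(2) finite_subset by blast
  have ge: "i0 \<ge> 1" using i0 assms(2) by auto
  have "coeff (pJ a b J) i0 = (\<Sum>i\<in>J. lam a J i * coeff (pb b i) i0)"
    unfolding pJ_def by (simp add: coeff_sum)
  also have "\<dots> = (\<Sum>i\<in>J. if i = i0 then lam a J i else 0)"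
    using ge by (intro sum.cong) (auto simp: coeff_pb)
  also have "\<dots> = lam a J i0" using fJ i0(1) by simp
  finally show ?thesis using i0(2) by auto
qed

lemma poly_pJ: "poly (pJ a b J) e = (\<Sum>i\<in>J. lam a J i * bpert b e i)"
  unfolding pJ_def by (simp add: poly_sum poly_pb)

lemma E1:
  fixes a :: "nat \<Rightarrow> real^'n"
  shows "\<forall>\<^sub>F e in at_right 0. general_position m (hyperplane_eps a b e)"
proof -
  have "\<forall>\<^sub>F e in at_right 0. \<forall>J\<in>Pow {1..m}. depJ a J \<longrightarrow> poly (pJ a b J) e \<noteq> 0"
  proof (rule eventually_ball_finite)
    show "finite (Pow {1..m})" by simp
    show "\<forall>J\<in>Pow {1..m}. \<forall>\<^sub>F e in at_right 0. depJ a J \<longrightarrow> poly (pJ a b J) e \<noteq> 0"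
    proof
      fix J assume J: "J \<in> Pow {1..m}"
      show "\<forall>\<^sub>F e in at_right 0. depJ a J \<longrightarrow> poly (pJ a b J) e \<noteq> 0"
      proof (cases "depJ a J")
        case True
        have "pJ a b J \<noteq> 0" using pJ_nz[OF True] J by blast
        from poly_ev_nz[OF this] have "\<forall>\<^sub>F e in at_right 0. poly (pJ a b J) e \<noteq> 0"
          by (auto elim: eventually_mono)
        then show ?thesis by (rule eventually_mono) simp
      next
        case False then show ?thesis by simp
      qed
    qed
  qed
  then show ?thesis
  proof (rule eventually_mono)
    fix e assume ev: "\<forall>J\<in>Pow {1..m}. depJ a J \<longrightarrow> poly (pJ a b J) e \<noteq> 0"
    show "general_position m (hyperplane_eps a b e)"
      unfolding general_position_def
    proof
      assume "\<exists>J S. J \<subseteq> {1..m} \<and> affine S \<and> S \<noteq> {} \<and>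
            aff_dim S = max (int DIM(real^'n) + 1 - int (card J)) 0 \<and>
            S \<subseteq> (\<Inter>i\<in>J. hyperplane_eps a b e i)"
      then obtain J S where h: "J \<subseteq> {1..m}" "affine S" "S \<noteq> {}"
        "aff_dim S = max (int DIM(real^'n) + 1 - int (card J)) 0"
        "S \<subseteq> (\<Inter>i\<in>J. hyperplane_eps a b e i)" by blast
      have fJ: "finite J" using h(1) finite_subset by blast
      have hS: "S \<subseteq> (\<Inter>i\<in>J. {x. a i \<bullet> x = bpert b e i})" using h(5) unfolding hyperplane_eps_def .
      have dep: "depJ a J" unfolding depJ_def by (rule dep_of_S[OF fJ h(2) h(3) h(4) hS])
      obtain x0 where x0: "x0 \<in> S" using h(3) by blast
      have "poly (pJ a b J) e = (\<Sum>i\<in>J. lam a J i * bpert b e i)" by (rule poly_pJ)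
      also have "\<dots> = (\<Sum>i\<in>J. lam a J i * (a i \<bullet> x0))"
        using hS x0 by (intro sum.cong) auto
      also have "\<dots> = (\<Sum>i\<in>J. lam a J i *\<^sub>R a i) \<bullet> x0"
        by (simp add: inner_sum_left)
      also have "\<dots> = 0" using lam_prop[OF dep] by simp
      finally have "poly (pJ a b J) e = 0" .
      moreover have "J \<in> Pow {1..m}" using h(1) by simp
      ultimately show False using ev dep by blast
    qed
  qed
qed

lemma E2:
  fixes a :: "nat \<Rightarrow> real^'n"
  shows "\<exists>F0. (\<forall>\<^sub>F e in at_right 0. face_family m a b e = F0) \<and> simplicial_complex m F0"
proof -
  define F0 where "F0 = {J. \<forall>\<^sub>F e in at_right 0. J \<in> face_family m a b e}"
  have happ: "\<exists>e. J \<in> face_family m a b e" if "J \<in> F0" for J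
  proof -
    have "\<forall>\<^sub>F e in at_right (0::real). J \<in> face_family m a b e" using that F0_def by simp
    from eventually_happens'[OF trivial_limit_at_right_real this] show ?thesis .
  qed
  have F0sub: "J \<in> Pow {1..m} \<and> J \<noteq> {}" if "J \<in> F0" for J
    using happ[OF that] unfolding face_family_def by auto
  have "\<forall>\<^sub>F e in at_right 0. \<forall>J\<in>Pow {1..m}. (J \<in> face_family m a b e \<longleftrightarrow> J \<in> F0)"
  proof (rule eventually_ball_finite)
    show "finite (Pow {1..m})" by simp
    show "\<forall>J\<in>Pow {1..m}. \<forall>\<^sub>F e in at_right 0. (J \<in> face_family m a b e \<longleftrightarrow> J \<in> F0)"
    proof
      fix J assume J: "J \<in> Pow {1..m}"
      show "\<forall>\<^sub>F e in at_right 0. (J \<in> face_family m a b e \<longleftrightarrow> J \<in> F0)"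
      proof (cases "J \<in> F0")
        case True
        then have "\<forall>\<^sub>F e in at_right (0::real). J \<in> face_family m a b e" using F0_def by simp
        then show ?thesis by (rule eventually_mono) (use True in simp)
      next
        case False
        then have "\<not> (\<forall>\<^sub>F e in at_right (0::real). J \<in> face_family m a b e)" using F0_def by simp
        then have "\<forall>\<^sub>F e in at_right (0::real). J \<notin> face_family m a b e"
          using ff_evc[of J m a b] unfolding evc_def by blast
        then show ?thesis by (rule eventually_mono) (use False in simp)
      qed
    qed
  qed
  then have ev: "\<forall>\<^sub>F e in at_right 0. face_family m a b e = F0"
  proof (rule eventually_mono)
    fix e assume h: "\<forall>J\<in>Pow {1..m}. (J \<in> face_family m a b e \<longleftrightarrow> J \<in> F0)"
    have s1: "face_family m a b e \<subseteq> Pow {1..m}" unfolding face_family_def by auto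
    show "face_family m a b e = F0"
    proof (rule set_eqI)
      fix J show "(J \<in> face_family m a b e) = (J \<in> F0)"
        using h s1 F0sub by blast
    qed
  qed
  have sc: "simplicial_complex m F0"
    unfolding simplicial_complex_def
  proof (intro conjI ballI allI impI)
    fix J assume "J \<in> F0" then show "J \<noteq> {}" using F0sub by blast
  next
    fix J assume "J \<in> F0" then show "J \<subseteq> {1..m}" using F0sub by blast
  next
    fix J I assume J: "J \<in> F0" and I: "I \<noteq> {} \<and> I \<subseteq> J"
    have "\<forall>\<^sub>F e in at_right (0::real). J \<in> face_family m a b e" using J F0_def by simp
    then have "\<forall>\<^sub>F e in at_right (0::real). I \<in> face_family m a b e"
      by (rule eventually_mono) (use I ff_mono in blast)
    then show "I \<in> F0" unfolding F0_def by simp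
  qed
  show ?thesis using ev sc by blast
qed

theorem lemma1:
  fixes m :: nat and a :: "nat \<Rightarrow> real ^ 'n" and b :: "nat \<Rightarrow> real"
  assumes "m \<ge> 1"
    and "\<forall>i\<in>{1..m}. a i \<noteq> 0"
    and "{x :: real ^ 'n. \<forall>i\<in>{1..m}. a i \<bullet> x \<le> b i} \<noteq> {}"
  shows "\<exists>\<delta>>0.
           (\<forall>\<epsilon>. 0 < \<epsilon> \<and> \<epsilon> < \<delta> \<longrightarrow> general_position m (hyperplane_eps a b \<epsilon>)) \<and>
           (\<exists>\<F>0. (\<forall>\<epsilon>. 0 < \<epsilon> \<and> \<epsilon> < \<delta> \<longrightarrow> face_family m a b \<epsilon> = \<F>0) \<and>
                  simplicial_complex m \<F>0)"
proof -
  obtain F0 where F0: "\<forall>\<^sub>F e in at_right 0. face_family m a b e = F0" "simplicial_complex m F0"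
    using E2[of m a b] by blast
  have "\<forall>\<^sub>F e in at_right (0::real). general_position m (hyperplane_eps a b e) \<and> face_family m a b e = F0"
    using E1[of m a b] F0(1) by (rule eventually_conj)
  then obtain d where d: "d > 0" "\<forall>y>0. y < d \<longrightarrow> general_position m (hyperplane_eps a b y) \<and> face_family m a b y = F0"
    unfolding eventually_at_right_field by blast
  show ?thesis
    by (rule exI[of _ d]) (use d F0(2) in auto)
qed

end
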